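(* Let $\{a_j\}_{j=-\infty}^{\infty}\in\ell^2$ and $m\in\mathbb{Z}$, $m\neq 0$. Suppose that for each $j$ there is a constant $C_j$ such that $|a_{j+m}|\leq C_j|a_j|$. If, in addition, there is a $J$ such that $|a_{j+m}|\leq|a_j|$ whenever $|j|\geq J$, then $a_j=0$ for all $j$. *)

theory Defs
  imports "HOL-Analysis.Analysis"
begin

end

theory Submission
  imports Defs
begin

theorem mainTheorem6:
  fixes a :: "int \<Rightarrow> complex" and m :: int
  assumes l2: "(\<lambda>j. (norm (a j))^2) summable_on UNIV"
    and m: "m \<noteq> 0"
    and C: "\<forall>j. \<exists>C::real. norm (a (j + m)) \<le> C * norm (a j)"
    and J: "\<exists>J::int. \<forall>j. \<bar>j\<bar> \<ge> J \<longrightarrow> norm (a (j + m)) \<le> norm (a j)"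
  shows "\<forall>j. a j = 0"
proof -
  obtain J where J: "\<And>j. \<bar>j\<bar> \<ge> J \<Longrightarrow> norm (a (j + m)) \<le> norm (a j)" using J by blast
  define f where "f = (\<lambda>j. (norm (a j))^2)"
  have core: "a n = 0" if hn: "\<And>k::nat. \<bar>n - int k * m\<bar> \<ge> J" for n
  proof (rule ccontr)
    assume nz: "a n \<noteq> 0"
    have mono: "norm (a n) \<le> norm (a (n - int k * m))" for k
    proof (induction k)
      case 0 then show ?case by simp
    next
      case (Suc k)
      have "norm (a ((n - int (Suc k) * m) + m)) \<le> norm (a (n - int (Suc k) * m))"
        using J hn[of "Suc k"] by blast
      moreover have "(n - int (Suc k) * m) + m = n - int k * m" by (simp add: algebra_simps)
      ultimately show ?case using Suc by (metis order_trans)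
    qed
    define c where "c = (norm (a n))^2"
    have c: "c > 0" using nz by (simp add: c_def)
    have ge: "f (n - int k * m) \<ge> c" for k
      unfolding f_def c_def using mono[of k] by (simp add: power_mono)
    define g where "g = (\<lambda>k::nat. n - int k * m)"
    have inj: "inj g" unfolding g_def inj_def using m by auto
    obtain N :: nat where N: "real N > infsum f UNIV / c" using reals_Archimedean2 by blast
    have "sum f (g ` {..<N}) = (\<Sum>k<N. f (g k))"
      by (rule sum.reindex_cong[OF inj_on_subset[OF inj]]) auto
    also have "\<dots> \<ge> (\<Sum>k<N. c)" by (rule sum_mono) (use ge g_def in auto)
    finally have s1: "sum f (g ` {..<N}) \<ge> real N * c" by simp
    have s2: "sum f (g ` {..<N}) \<le> infsum f UNIV"
      by (rule finite_sum_le_infsum) (use l2 f_def in auto)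
    have "real N * c > infsum f UNIV" using N c by (simp add: field_simps)
    then show False using s1 s2 by linarith
  qed
  have propg: "a (n + int k * m) = 0" if "a n = 0" for n k
  proof (induction k)
    case 0 then show ?case using that by simp
  next
    case (Suc k)
    obtain D where "norm (a ((n + int k * m) + m)) \<le> D * norm (a (n + int k * m))" using C by blast
    moreover have "(n + int k * m) + m = n + int (Suc k) * m" by (simp add: algebra_simps)
    ultimately show ?case using Suc
      by (metis mult_zero_right norm_le_zero_iff norm_zero)
  qed
  show ?thesis
  proof
    fix j
    define k0 :: nat where "k0 = nat (\<bar>j\<bar> + \<bar>J\<bar>)"
    define n where "n = j - int k0 * m"
    have "a n = 0"
    proof (rule core)
      fix k :: nat
      have "\<bar>n - int k * m\<bar> = \<bar>j - int (k0 + k) * m\<bar>" by (simp add: n_def algebra_simps)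
      also have "\<dots> \<ge> int (k0 + k) * \<bar>m\<bar> - \<bar>j\<bar>" by (simp add: abs_mult)
      also have "int (k0 + k) * \<bar>m\<bar> \<ge> int (k0 + k)" using m
        by (metis mult.right_neutral mult_left_mono of_nat_0_le_iff zero_less_abs_iff int_one_le_iff_zero_less)
      ultimately show "\<bar>n - int k * m\<bar> \<ge> J" unfolding k0_def by linarith
    qed
    then have "a (n + int k0 * m) = 0" by (rule propg)
    then show "a j = 0" by (simp add: n_def)
  qed
qed

end
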